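(* Let $n\in\mathbb N$, $\delta>0$, and let $d$ be a metric on $\mathbb R^n$ induced by a norm. Let $\{\mathcal D^n(\delta);\tilde w_1,\dots,\tilde w_N;p_1,\dots,p_N\}$ be a DIFS in which each $\tilde w_i$ is the $\delta$-roundoff of a contraction $w_i:\mathbb R^n\to\mathbb R^n$ on $(\mathbb R^n,d)$ with contractivity factor $\lambda_i\in[0,1)$ and fixed point $x_f^{(i)}$. Let $o\in\mathbb R^n$ be arbitrary, and put $r_{max}:=\max_i d(x_f^{(i)},o)$, $\lambda_{max}:=\max_i\lambda_i$, $\alpha:=\frac{1+\lambda_{max}}{1-\lambda_{max}}$ and $r:=\alpha r_{max}+\theta(1-\lambda_{max})^{-1}$. Then for every $\varepsilon>0$, the set $S=B(o,r+\varepsilon)\cap\mathcal D^n(\delta)$, where $B(o,\rho)$ is the open ball in $(\mathbb R^n,d)$ of center $o$ and radius $\rho$, satisfies $\tilde w_i(S)\subset S$ for every $i\in\{1,\dots,N\}$. Moreover, the set $\mathcal A$ of all recurrent states of the Markov chain associated with the DIFS is nonempty and $\mathcal A\subset S$.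
   Context: For $m=(m_1,\dots,m_n)\in\mathbb Z^n$ the $\delta$-cube is $C_\delta(m)=\prod_{j=1}^n[(m_j-\tfrac12)\delta,(m_j+\tfrac12)\delta)$; these cubes partition $\mathbb R^n$. The $\delta$-discretization is $\mathcal D^n(\delta)=\{\delta m:m\in\mathbb Z^n\}\subset\mathbb R^n$. The $\delta$-roundoff of $x\in\mathbb R^n$ is $\tilde x=\delta m$ where $x\in C_\delta(m)$; the $\delta$-roundoff of a map $w:\mathbb R^n\to\mathbb R^n$ is $\tilde w:\mathcal D^n(\delta)\to\mathcal D^n(\delta)$, $\tilde w(\tilde x)=\widetilde{w(\tilde x)}$. $\theta:=\tfrac12\operatorname{diam}_d(C_\delta(0))$. A DIFS (discrete IFS with place-dependent probabilities) $\{S;\tilde w_1,\dots,\tilde w_N;p_1,\dots,p_N\}$ consists of $S\subset\mathcal D^n(\delta)$, maps $\tilde w_i:S\to S$ and functions $p_i:S\to(0,1]$ with $\sum_i p_i(\tilde x)=1$ for all $\tilde x\in S$. Its associated Markov chain on $S$ has transition probabilities $P(\tilde x,\tilde y)=\sum_{i=1}^N p_i(\tilde x)\mathbf 1_{\{\tilde y\}}(\tilde w_i(\tilde x))$. A state $\tilde x$ is recurrent if the chain started at $\tilde x$ returns to $\tilde x$ in finitely many steps with probability $1$. *)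

theory Defs
  imports "HOL-Analysis.Analysis"
begin

text \<open>A norm on R^n (the metric d is d x y = nrm (x - y)).\<close>
definition is_norm :: "(real^'n \<Rightarrow> real) \<Rightarrow> bool" where
  "is_norm nrm \<longleftrightarrow> (\<forall>x. 0 \<le> nrm x) \<and> (\<forall>x. nrm x = 0 \<longleftrightarrow> x = 0)
     \<and> (\<forall>a x. nrm (a *\<^sub>R x) = \<bar>a\<bar> * nrm x) \<and> (\<forall>x y. nrm (x + y) \<le> nrm x + nrm y)"

definition grid_pt :: "real \<Rightarrow> int^'n \<Rightarrow> real^'n" where
  "grid_pt \<delta> m = (\<chi> j. \<delta> * of_int (m $ j))"

definition cube :: "real \<Rightarrow> int^'n \<Rightarrow> (real^'n) set" where
  "cube \<delta> m = {x. \<forall>j. (of_int (m $ j) - 1/2) * \<delta> \<le> x $ j \<and> x $ j < (of_int (m $ j) + 1/2) * \<delta>}"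

definition discretization :: "real \<Rightarrow> (real^'n) set" where
  "discretization \<delta> = range (grid_pt \<delta>)"

definition roundoff :: "real \<Rightarrow> real^'n \<Rightarrow> real^'n" where
  "roundoff \<delta> x = (THE y. \<exists>m. y = grid_pt \<delta> m \<and> x \<in> cube \<delta> m)"

definition diam_d :: "(real^'n \<Rightarrow> real) \<Rightarrow> (real^'n) set \<Rightarrow> real" where
  "diam_d nrm A = (SUP x\<in>A. SUP y\<in>A. nrm (x - y))"

definition theta :: "(real^'n \<Rightarrow> real) \<Rightarrow> real \<Rightarrow> real" where
  "theta nrm \<delta> = diam_d nrm (cube \<delta> 0) / 2"

definition is_DIFS :: "'a set \<Rightarrow> (nat \<Rightarrow> 'a \<Rightarrow> 'a) \<Rightarrow> (nat \<Rightarrow> 'a \<Rightarrow> real) \<Rightarrow> nat \<Rightarrow> bool" where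
  "is_DIFS S W p N \<longleftrightarrow> (\<forall>i\<in>{1..N}. \<forall>x\<in>S. W i x \<in> S)
     \<and> (\<forall>i\<in>{1..N}. \<forall>x\<in>S. 0 < p i x \<and> p i x \<le> 1)
     \<and> (\<forall>x\<in>S. (\<Sum>i=1..N. p i x) = 1)"

text \<open>hit_within N W p k y z: probability that the associated Markov chain started at z
  visits y at some time in 1..k (transition P(x,y) = sum_i p_i(x) [W_i x = y]).\<close>
fun hit_within :: "nat \<Rightarrow> (nat \<Rightarrow> 'a \<Rightarrow> 'a) \<Rightarrow> (nat \<Rightarrow> 'a \<Rightarrow> real) \<Rightarrow> nat \<Rightarrow> 'a \<Rightarrow> 'a \<Rightarrow> real" where
  "hit_within N W p 0 y z = 0"
| "hit_within N W p (Suc k) y z =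
     (\<Sum>i=1..N. p i z * (if W i z = y then 1 else hit_within N W p k y (W i z)))"

text \<open>x is recurrent: the probability of returning to x in finitely many steps
  (the increasing limit of the probability of returning within k steps) is 1.\<close>
definition recurrent :: "nat \<Rightarrow> (nat \<Rightarrow> 'a \<Rightarrow> 'a) \<Rightarrow> (nat \<Rightarrow> 'a \<Rightarrow> real) \<Rightarrow> 'a \<Rightarrow> bool" where
  "recurrent N W p x \<longleftrightarrow> (SUP k. hit_within N W p k x x) = 1"

end

theory Submission
  imports Defs
begin

lemma nrm_sum:
  assumes "is_norm nrm" "finite S"
  shows "nrm (sum f S) \<le> (\<Sum>i\<in>S. nrm (f i))"
  using assms(2)
proof (induction S rule: finite_induct)
  case empty
  have "nrm 0 = 0" using assms(1) unfolding is_norm_def by blast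
  then show ?case by simp
next
  case (insert a S)
  have "nrm (f a + sum f S) \<le> nrm (f a) + nrm (sum f S)"
    using assms(1) unfolding is_norm_def by blast
  then show ?case using insert by simp
qed

lemma nrm_upper:
  assumes "is_norm nrm"
  shows "nrm x \<le> (\<Sum>j\<in>UNIV. \<bar>x $ j\<bar> * nrm (axis j 1))"
proof -
  have "x = (\<Sum>j\<in>UNIV. (x $ j) *\<^sub>R axis j (1::real))"
    using basis_expansion[of x] by (simp add: scalar_mult_eq_scaleR)
  then have "nrm x = nrm (\<Sum>j\<in>UNIV. (x $ j) *\<^sub>R axis j (1::real))" by simp
  also have "\<dots> \<le> (\<Sum>j\<in>UNIV. nrm ((x $ j) *\<^sub>R axis j (1::real)))"
    by (rule nrm_sum[OF assms]) simp
  also have "\<dots> = (\<Sum>j\<in>UNIV. \<bar>x $ j\<bar> * nrm (axis j 1))"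
    using assms unfolding is_norm_def by simp
  finally show ?thesis .
qed

lemma nrm_upper2:
  assumes "is_norm nrm"
  shows "nrm x \<le> norm x * (\<Sum>j\<in>UNIV. nrm (axis j 1))"
proof -
  have "nrm x \<le> (\<Sum>j\<in>UNIV. \<bar>x $ j\<bar> * nrm (axis j 1))" by (rule nrm_upper[OF assms])
  also have "\<dots> \<le> (\<Sum>j\<in>UNIV. norm x * nrm (axis j 1))"
    apply (rule sum_mono) apply (rule mult_right_mono)
    using component_le_norm_cart assms unfolding is_norm_def by auto
  finally show ?thesis by (simp add: sum_distrib_left)
qed

lemma nrm_basic:
  assumes "is_norm nrm"
  shows "nrm (x - y) = nrm (y - x)" "nrm (a - b) \<le> nrm (a - m) + nrm (m - b)" "0 \<le> nrm x"
    "nrm 0 = 0" "nrm (t *\<^sub>R x) = \<bar>t\<bar> * nrm x" "nrm (x + y) \<le> nrm x + nrm y"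
proof -
  have "nrm (x - y) = nrm ((-1) *\<^sub>R (y - x))" by simp
  also have "\<dots> = nrm (y - x)" using assms unfolding is_norm_def by (metis abs_minus_cancel abs_one mult_1)
  finally show "nrm (x - y) = nrm (y - x)" .
  have "a - b = (a - m) + (m - b)" by simp
  then show "nrm (a - b) \<le> nrm (a - m) + nrm (m - b)" using assms unfolding is_norm_def by metis
qed (use assms in \<open>auto simp: is_norm_def\<close>)

lemma nrm_lower:
  fixes nrm :: "real^'n \<Rightarrow> real"
  assumes "is_norm nrm"
  obtains m where "m > 0" "\<And>x. m * norm x \<le> nrm x"
proof -
  define C where "C = (\<Sum>j\<in>UNIV. nrm (axis j (1::real)))"
  have C0: "C \<ge> 0" unfolding C_def using nrm_basic(3)[OF assms] by (simp add: sum_nonneg)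
  have cont: "continuous_on (sphere (0::real^'n) 1) nrm"
    unfolding continuous_on_iff
  proof (intro ballI allI impI)
    fix x x' :: "real^'n" and e :: real assume "e > 0"
    show "\<exists>d>0. \<forall>x'\<in>sphere 0 1. dist x' x < d \<longrightarrow> dist (nrm x') (nrm x) < e"
    proof (intro exI[of _ "e / (C + 1)"] conjI ballI impI)
      show "e / (C + 1) > 0" using \<open>e > 0\<close> C0 by simp
      fix y assume "dist y x < e / (C + 1)"
      then have "norm (y - x) * (C + 1) < e" using C0 by (simp add: dist_norm field_simps)
      moreover have "\<bar>nrm y - nrm x\<bar> \<le> nrm (y - x)"
        using nrm_basic(2)[OF assms, of y 0 x] nrm_basic(2)[OF assms, of x 0 y] nrm_basic(1)[OF assms, of x y]
        by simp
      moreover have "nrm (y - x) \<le> norm (y - x) * C" using nrm_upper2[OF assms] C_def by simp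
      moreover have "norm (y - x) * C \<le> norm (y - x) * (C + 1)" by (simp add: mult_left_mono)
      ultimately show "dist (nrm y) (nrm x) < e" by (simp add: dist_real_def)
    qed
  qed
  have ne: "sphere (0::real^'n) 1 \<noteq> {}"
    using norm_axis_1[of undefined] by (metis mem_sphere_0 empty_iff)
  obtain s where s: "s \<in> sphere 0 1" "\<And>t. t \<in> sphere 0 1 \<Longrightarrow> nrm s \<le> nrm t"
    using continuous_attains_inf[OF compact_sphere ne cont] by blast
  have "s \<noteq> 0" using s(1) by auto
  then have m0: "nrm s > 0" using assms unfolding is_norm_def by (metis less_eq_real_def)
  show ?thesis
  proof (rule that[OF m0])
    fix x :: "real^'n"
    show "nrm s * norm x \<le> nrm x"
    proof (cases "x = 0")
      case True then show ?thesis using nrm_basic(4)[OF assms] by simp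
    next
      case False
      have "(1 / norm x) *\<^sub>R x \<in> sphere 0 1" using False by simp
      then have "nrm s \<le> nrm ((1 / norm x) *\<^sub>R x)" by (rule s(2))
      also have "\<dots> = nrm x / norm x" using nrm_basic(5)[OF assms] by simp
      finally show ?thesis using False by (simp add: field_simps)
    qed
  qed
qed


definition rmi :: "real \<Rightarrow> real^'n \<Rightarrow> int^'n" where
  "rmi \<delta> x = (\<chi> j. floor (x $ j / \<delta> + 1/2))"

lemma cube_iff:
  assumes "\<delta> > 0"
  shows "x \<in> cube \<delta> m \<longleftrightarrow> m = rmi \<delta> x"
proof -
  have "((of_int (m $ j) - 1/2) * \<delta> \<le> x $ j \<and> x $ j < (of_int (m $ j) + 1/2) * \<delta>)
        \<longleftrightarrow> m $ j = floor (x $ j / \<delta> + 1/2)" for j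
  proof -
    have "((of_int (m $ j) - 1/2) * \<delta> \<le> x $ j \<and> x $ j < (of_int (m $ j) + 1/2) * \<delta>)
        \<longleftrightarrow> (of_int (m $ j) \<le> x $ j / \<delta> + 1/2 \<and> x $ j / \<delta> + 1/2 < of_int (m $ j) + 1)"
      using assms by (auto simp: field_simps)
    also have "\<dots> \<longleftrightarrow> m $ j = floor (x $ j / \<delta> + 1/2)" by linarith
    finally show ?thesis .
  qed
  then show ?thesis unfolding cube_def rmi_def by (auto simp: vec_eq_iff)
qed

lemma roundoff_eq:
  assumes "\<delta> > 0"
  shows "roundoff \<delta> x = grid_pt \<delta> (rmi \<delta> x)"
  unfolding roundoff_def
proof (rule the_equality)
  show "\<exists>m. grid_pt \<delta> (rmi \<delta> x) = grid_pt \<delta> m \<and> x \<in> cube \<delta> m"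
    using cube_iff[OF assms, of x "rmi \<delta> x"] by blast
  fix y assume "\<exists>m. y = grid_pt \<delta> m \<and> x \<in> cube \<delta> m"
  then obtain m where "y = grid_pt \<delta> m" "x \<in> cube \<delta> m" by blast
  then show "y = grid_pt \<delta> (rmi \<delta> x)" using cube_iff[OF assms, of x m] by simp
qed

lemma roundoff_disc: "\<delta> > 0 \<Longrightarrow> roundoff \<delta> x \<in> discretization \<delta>"
  by (simp add: roundoff_eq discretization_def)

lemma diff_in_cube0:
  assumes "\<delta> > 0"
  shows "x - roundoff \<delta> x \<in> cube \<delta> 0"
proof -
  have "x \<in> cube \<delta> (rmi \<delta> x)" using cube_iff[OF assms, of x "rmi \<delta> x"] by simp
  then have "(of_int (rmi \<delta> x $ j) - 1/2) * \<delta> \<le> x $ j \<and> x $ j < (of_int (rmi \<delta> x $ j) + 1/2) * \<delta>" for j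
    unfolding cube_def by blast
  note h = this
  then have "- (\<delta>/2) \<le> x$j - \<delta> * of_int (rmi \<delta> x $ j) \<and> x$j - \<delta> * of_int (rmi \<delta> x $ j) < \<delta>/2" for j
  proof -
    have e1: "(of_int (rmi \<delta> x $ j) - 1/2) * \<delta> = \<delta> * of_int (rmi \<delta> x $ j) - \<delta>/2"
      "(of_int (rmi \<delta> x $ j) + 1/2) * \<delta> = \<delta> * of_int (rmi \<delta> x $ j) + \<delta>/2"
      by (simp_all add: algebra_simps)
    show ?thesis using h[of j] unfolding e1 by linarith
  qed
  then show ?thesis unfolding roundoff_eq[OF assms] cube_def grid_pt_def
    by simp
qed

lemma cube0_bound:
  assumes "is_norm nrm" "\<delta> > 0" "x \<in> cube \<delta> 0" "y \<in> cube \<delta> 0"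
  shows "nrm (x - y) \<le> \<delta> * (\<Sum>j\<in>UNIV. nrm (axis j (1::real)))"
proof -
  have "nrm (x - y) \<le> (\<Sum>j\<in>UNIV. \<bar>(x - y) $ j\<bar> * nrm (axis j 1))" by (rule nrm_upper[OF assms(1)])
  also have "\<dots> \<le> (\<Sum>j\<in>UNIV. \<delta> * nrm (axis j 1))"
  proof (rule sum_mono, rule mult_right_mono)
    fix j
    have "- (\<delta> / 2) \<le> x $ j" "x $ j < \<delta> / 2" "- (\<delta> / 2) \<le> y $ j" "y $ j < \<delta> / 2"
      using assms(3,4) unfolding cube_def by auto
    then show "\<bar>(x - y) $ j\<bar> \<le> \<delta>" by auto
    show "0 \<le> nrm (axis j 1)" using nrm_basic(3)[OF assms(1)] .
  qed
  finally show ?thesis by (simp add: sum_distrib_left)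
qed

lemma diam_upper:
  assumes "is_norm nrm" "\<delta> > 0" "x \<in> cube \<delta> 0" "y \<in> cube \<delta> 0"
  shows "nrm (x - y) \<le> diam_d nrm (cube \<delta> 0)"
proof -
  define B where "B = \<delta> * (\<Sum>j\<in>UNIV. nrm (axis j (1::real)))"
  have bd: "\<And>a b. a \<in> cube \<delta> 0 \<Longrightarrow> b \<in> cube \<delta> 0 \<Longrightarrow> nrm (a - b) \<le> B"
    using cube0_bound[OF assms(1,2)] B_def by blast
  have inner_bdd: "bdd_above ((\<lambda>b. nrm (a - b)) ` cube \<delta> 0)" if "a \<in> cube \<delta> 0" for a
    using bd that by (auto intro!: bdd_aboveI)
  have inner_le: "(SUP b\<in>cube \<delta> 0. nrm (a - b)) \<le> B" if "a \<in> cube \<delta> 0" for a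
    using bd that assms(4) by (intro cSUP_least) auto
  have outer_bdd: "bdd_above ((\<lambda>a. SUP b\<in>cube \<delta> 0. nrm (a - b)) ` cube \<delta> 0)"
    using inner_le by (auto intro!: bdd_aboveI)
  have "nrm (x - y) \<le> (SUP b\<in>cube \<delta> 0. nrm (x - b))"
    by (rule cSUP_upper[OF assms(4) inner_bdd[OF assms(3)]])
  also have "\<dots> \<le> diam_d nrm (cube \<delta> 0)"
    unfolding diam_d_def by (rule cSUP_upper[OF assms(3) outer_bdd])
  finally show ?thesis .
qed

lemma theta_nonneg:
  fixes nrm :: "real^'n \<Rightarrow> real"
  assumes "is_norm nrm" "\<delta> > 0"
  shows "theta nrm \<delta> \<ge> 0"
proof -
  have z: "(0::real^'n) \<in> cube \<delta> 0" using assms(2) by (simp add: cube_def)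
  have "nrm ((0::real^'n) - 0) \<le> diam_d nrm (cube \<delta> 0)" by (rule diam_upper[OF assms z z])
  then show ?thesis unfolding theta_def using nrm_basic(4)[OF assms(1)] by simp
qed

lemma roundoff_err:
  fixes nrm :: "real^'n \<Rightarrow> real"
  assumes "is_norm nrm" "\<delta> > 0"
  shows "nrm (x - roundoff \<delta> x) \<le> theta nrm \<delta>"
proof -
  define v where "v = x - roundoff \<delta> x"
  define D where "D = diam_d nrm (cube \<delta> (0::int^'n))"
  have v: "v \<in> cube \<delta> 0" unfolding v_def by (rule diff_in_cube0[OF assms(2)])
  have D0: "D \<ge> 0" using theta_nonneg[OF assms] unfolding theta_def D_def by simp
  have key: "(1 + t) * nrm v \<le> D" if "0 \<le> t" "t < 1" for t
  proof -
    have "(- t) *\<^sub>R v \<in> cube \<delta> 0"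
    proof -
      have "- (\<delta> / 2) \<le> - t * (v $ j) \<and> - t * (v $ j) < \<delta> / 2" for j
      proof -
        have a: "- (\<delta> / 2) \<le> v $ j" "v $ j < \<delta> / 2" using v unfolding cube_def by auto
        have "t * (v $ j) \<le> t * (\<delta> / 2)" using a that by (intro mult_left_mono) auto
        moreover have "t * (\<delta> / 2) < \<delta> / 2" using that assms(2) by simp
        moreover have "t * (- (\<delta> / 2)) \<le> t * (v $ j)" using a that by (intro mult_left_mono) auto
        moreover have "- (\<delta> / 2) < t * (- (\<delta> / 2))" using that assms(2) by simp
        ultimately show ?thesis by linarith
      qed
      then show ?thesis unfolding cube_def by auto
    qed
    then have "nrm (v - (- t) *\<^sub>R v) \<le> D" unfolding D_def by (rule diam_upper[OF assms v])
    moreover have "v - (- t) *\<^sub>R v = (1 + t) *\<^sub>R v" by (simp add: algebra_simps)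
    ultimately show ?thesis using nrm_basic(5)[OF assms(1)] that by simp
  qed
  have "2 * nrm v \<le> D"
  proof (rule ccontr)
    assume "\<not> 2 * nrm v \<le> D"
    then have g: "2 * nrm v > D" by simp
    then have nv: "nrm v > 0" using D0 by simp
    define t where "t = 1 - (2 * nrm v - D) / (2 * nrm v)"
    have "t < 1" unfolding t_def using g nv by simp
    moreover have "0 \<le> t" unfolding t_def using D0 nv by (simp add: field_simps)
    ultimately have "(1 + t) * nrm v \<le> D" using key by blast
    moreover have "(1 + t) * nrm v = nrm v + D / 2" unfolding t_def using nv by (simp add: field_simps)
    ultimately show False using g by simp
  qed
  then show ?thesis unfolding theta_def v_def D_def by simp
qed

lemma finite_int_vecs:
  fixes A :: "int set"
  assumes "finite A"
  shows "finite {k::int^'n. \<forall>j. k $ j \<in> A}"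
proof -
  have "{k::int^'n. \<forall>j. k $ j \<in> A} \<subseteq> (\<lambda>f. \<chi> j. f j) ` (PiE UNIV (\<lambda>_. A))"
  proof
    fix k :: "int^'n" assume "k \<in> {k. \<forall>j. k $ j \<in> A}"
    then have "vec_nth k \<in> PiE UNIV (\<lambda>_. A)" by auto
    then show "k \<in> (\<lambda>f. \<chi> j. f j) ` (PiE UNIV (\<lambda>_. A))" by (intro image_eqI[of _ _ "vec_nth k"]) auto
  qed
  moreover have "finite ((\<lambda>f. \<chi> j. f j) ` (PiE UNIV (\<lambda>_. A)))"
    using assms by (intro finite_imageI finite_PiE) auto
  ultimately show ?thesis by (rule finite_subset)
qed

lemma finite_ball_grid:
  fixes nrm :: "real^'n \<Rightarrow> real"
  assumes "is_norm nrm" "\<delta> > 0"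
  shows "finite ({y. nrm (y - c) < \<rho>} \<inter> discretization \<delta>)"
proof -
  obtain m where m: "m > 0" "\<And>x. m * norm x \<le> nrm x" using nrm_lower[OF assms(1)] by blast
  define K where "K = ceiling ((\<rho> / m + norm c) / \<delta>)"
  have "{y. nrm (y - c) < \<rho>} \<inter> discretization \<delta> \<subseteq> grid_pt \<delta> ` {k::int^'n. \<forall>j. k $ j \<in> {-K..K}}"
  proof
    fix y assume y: "y \<in> {y. nrm (y - c) < \<rho>} \<inter> discretization \<delta>"
    then obtain k where k: "y = grid_pt \<delta> k" unfolding discretization_def by auto
    have "\<bar>(of_int (k $ j)::real)\<bar> \<le> of_int K" for j
    proof -
      have "m * norm (y - c) < \<rho>" using m(2)[of "y - c"] y by simp
      then have n1: "norm (y - c) \<le> \<rho> / m" using m(1) by (simp add: field_simps)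
      have "\<bar>y $ j\<bar> \<le> \<bar>(y - c) $ j\<bar> + \<bar>c $ j\<bar>" by simp
      also have "\<dots> \<le> norm (y - c) + norm c" using component_le_norm_cart[of "y - c" j] component_le_norm_cart[of c j] by (intro add_mono) auto
      finally have "\<bar>\<delta> * of_int (k $ j)\<bar> \<le> \<rho> / m + norm c" using n1 k unfolding grid_pt_def by simp
      then have "\<bar>of_int (k $ j)\<bar> \<le> (\<rho> / m + norm c) / \<delta>" using assms(2) by (simp add: abs_mult field_simps)
      also have "\<dots> \<le> of_int K" unfolding K_def by simp
      finally show ?thesis .
    qed
    note kb = this
    have "k $ j \<in> {-K..K}" for j
    proof -
      have "real_of_int \<bar>k $ j\<bar> \<le> real_of_int K" using kb[of j] by simp
      then have "\<bar>k $ j\<bar> \<le> K" by (simp only: of_int_le_iff)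
      then show ?thesis by auto
    qed
    then show "y \<in> grid_pt \<delta> ` {k::int^'n. \<forall>j. k $ j \<in> {-K..K}}" using k by auto
  qed
  moreover have "finite (grid_pt \<delta> ` {k::int^'n. \<forall>j. k $ j \<in> {-K..K}})"
    by (intro finite_imageI finite_int_vecs) simp
  ultimately show ?thesis by (rule finite_subset)
qed


lemma difs_facts:
  assumes "is_DIFS D W p N"
  shows "\<And>i x. i \<in> {1..N} \<Longrightarrow> x \<in> D \<Longrightarrow> W i x \<in> D"
    "\<And>i x. i \<in> {1..N} \<Longrightarrow> x \<in> D \<Longrightarrow> 0 < p i x"
    "\<And>x. x \<in> D \<Longrightarrow> (\<Sum>i=1..N. p i x) = 1"
  using assms unfolding is_DIFS_def by auto

lemma hit_bounds:
  assumes "is_DIFS D W p N" "z \<in> D"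
  shows "0 \<le> hit_within N W p k y z \<and> hit_within N W p k y z \<le> 1"
  using assms(2)
proof (induction k arbitrary: z)
  case 0 then show ?case by simp
next
  case (Suc k)
  let ?f = "\<lambda>i. p i z * (if W i z = y then 1 else hit_within N W p k y (W i z))"
  have t: "0 \<le> ?f i \<and> ?f i \<le> p i z" if "i \<in> {1..N}" for i
  proof -
    have "W i z \<in> D" using difs_facts(1)[OF assms(1) that Suc.prems] .
    then have "0 \<le> (if W i z = y then 1 else hit_within N W p k y (W i z))
       \<and> (if W i z = y then 1 else hit_within N W p k y (W i z)) \<le> 1" using Suc.IH by auto
    moreover have "0 < p i z" using difs_facts(2)[OF assms(1) that Suc.prems] .
    ultimately show ?thesis by (simp add: mult_le_cancel_left1)
  qed
  have "0 \<le> sum ?f {1..N}" using t by (intro sum_nonneg) auto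
  moreover have "sum ?f {1..N} \<le> (\<Sum>i=1..N. p i z)" using t by (intro sum_mono) auto
  ultimately show ?case using difs_facts(3)[OF assms(1) Suc.prems] by simp
qed

lemma hit_mono_Suc:
  assumes "is_DIFS D W p N" "z \<in> D"
  shows "hit_within N W p k y z \<le> hit_within N W p (Suc k) y z"
  using assms(2)
proof (induction k arbitrary: z)
  case 0 then show ?case using hit_bounds[OF assms(1) 0, of "Suc 0" y] by simp
next
  case (Suc k)
  have "(\<Sum>i=1..N. p i z * (if W i z = y then 1 else hit_within N W p k y (W i z)))
     \<le> (\<Sum>i=1..N. p i z * (if W i z = y then 1 else hit_within N W p (Suc k) y (W i z)))"
  proof (rule sum_mono)
    fix i assume i: "i \<in> {1..N}"
    have "W i z \<in> D" using difs_facts(1)[OF assms(1) i Suc.prems] .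
    moreover have "0 < p i z" using difs_facts(2)[OF assms(1) i Suc.prems] .
    ultimately show "p i z * (if W i z = y then 1 else hit_within N W p k y (W i z))
      \<le> p i z * (if W i z = y then 1 else hit_within N W p (Suc k) y (W i z))"
      using Suc.IH by (intro mult_left_mono) auto
  qed
  then show ?case by simp
qed

lemma hit_mono:
  assumes "is_DIFS D W p N" "z \<in> D" "k \<le> k'"
  shows "hit_within N W p k y z \<le> hit_within N W p k' y z"
  using assms(3)
proof (induction k' rule: dec_induct)
  case base then show ?case by simp
next
  case (step m) then show ?case using hit_mono_Suc[OF assms(1,2), of m y] by simp
qed

lemma hit_zero:
  assumes "\<And>i z. i \<in> {1..N} \<Longrightarrow> z \<in> T \<Longrightarrow> W i z \<in> T" "x \<notin> T" "z \<in> T"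
  shows "hit_within N W p k x z = 0"
  using assms(3)
proof (induction k arbitrary: z)
  case 0 then show ?case by simp
next
  case (Suc k)
  have "(\<Sum>i=1..N. p i z * (if W i z = x then 1 else hit_within N W p k x (W i z))) = 0"
  proof (rule sum.neutral, rule ballI)
    fix i assume i: "i \<in> {1..N}"
    have "W i z \<in> T" using assms(1)[OF i Suc.prems] .
    then show "p i z * (if W i z = x then 1 else hit_within N W p k x (W i z)) = 0"
      using assms(2) Suc.IH by auto
  qed
  then show ?case by simp
qed

lemma not_recurrent:
  assumes "\<And>i z. i \<in> {1..N} \<Longrightarrow> z \<in> T \<Longrightarrow> W i z \<in> T" "x \<notin> T"
    "\<And>i. i \<in> {1..N} \<Longrightarrow> W i x \<in> T"
  shows "\<not> recurrent N W p x"
proof -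
  have "hit_within N W p k x x = 0" for k
  proof (cases k)
    case 0 then show ?thesis by simp
  next
    case (Suc k')
    have "(\<Sum>i=1..N. p i x * (if W i x = x then 1 else hit_within N W p k' x (W i x))) = 0"
    proof (rule sum.neutral, rule ballI)
      fix i assume i: "i \<in> {1..N}"
      have "W i x \<in> T" using assms(3)[OF i] .
      then show "p i x * (if W i x = x then 1 else hit_within N W p k' x (W i x)) = 0"
        using assms(2) hit_zero[OF assms(1,2)] by auto
    qed
    then show ?thesis using Suc by simp
  qed
  then show ?thesis unfolding recurrent_def by simp
qed

lemma hit_Suc_ge:
  assumes "is_DIFS D W p N" "z \<in> D" "i \<in> {1..N}"
  shows "p i z * (if W i z = y then 1 else hit_within N W p k y (W i z)) \<le> hit_within N W p (Suc k) y z"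
proof -
  have "p i z * (if W i z = y then 1 else hit_within N W p k y (W i z))
     \<le> (\<Sum>i=1..N. p i z * (if W i z = y then 1 else hit_within N W p k y (W i z)))"
  proof (rule member_le_sum[OF assms(3)])
    fix j assume j: "j \<in> {1..N} - {i}"
    have "W j z \<in> D" using difs_facts(1)[OF assms(1) _ assms(2)] j by auto
    moreover have "0 < p j z" using difs_facts(2)[OF assms(1) _ assms(2)] j by auto
    ultimately show "0 \<le> p j z * (if W j z = y then 1 else hit_within N W p k y (W j z))"
      using hit_bounds[OF assms(1)] by auto
  qed simp
  then show ?thesis by simp
qed

lemma one_minus_hit:
  assumes "is_DIFS D W p N" "z \<in> D"
  shows "1 - hit_within N W p (Suc k) y z
     = (\<Sum>i=1..N. p i z * (if W i z = y then 0 else 1 - hit_within N W p k y (W i z)))"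
proof -
  have "1 - hit_within N W p (Suc k) y z = (\<Sum>i=1..N. p i z) - (\<Sum>i=1..N. p i z * (if W i z = y then 1 else hit_within N W p k y (W i z)))"
    using difs_facts(3)[OF assms] by simp
  also have "\<dots> = (\<Sum>i=1..N. p i z - p i z * (if W i z = y then 1 else hit_within N W p k y (W i z)))"
    by (simp add: sum_subtractf)
  also have "\<dots> = (\<Sum>i=1..N. p i z * (if W i z = y then 0 else 1 - hit_within N W p k y (W i z)))"
    by (rule sum.cong) (auto simp: algebra_simps)
  finally show ?thesis .
qed

lemma exists_recurrent:
  assumes difs: "is_DIFS D W p N" and fin: "finite F" and FD: "F \<subseteq> D" and ne: "F \<noteq> {}"
    and cl: "\<And>i z. i \<in> {1..N} \<Longrightarrow> z \<in> F \<Longrightarrow> W i z \<in> F" and N1: "N \<ge> 1"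
  shows "\<exists>x\<in>F. recurrent N W p x"
proof -
  define E where "E = {(z, W i z) | z i. z \<in> F \<and> i \<in> {1..N}}"
  have Ecl: "b \<in> F" if "(a, b) \<in> E\<^sup>*" "a \<in> F" for a b
    using that(1,2) by (induction rule: rtrancl_induct) (auto simp: E_def intro: cl)
  define R where "R z = E\<^sup>* `` {z}" for z
  have RF: "R z \<subseteq> F" if "z \<in> F" for z using Ecl that unfolding R_def by auto
  have Rfin: "finite (R z)" if "z \<in> F" for z using RF[OF that] fin finite_subset by blast
  define mv where "mv = Min ((\<lambda>z. card (R z)) ` F)"
  have "mv \<in> (\<lambda>z. card (R z)) ` F" unfolding mv_def using fin ne by (intro Min_in) auto
  then obtain x where xF: "x \<in> F" and xm: "card (R x) = mv" by auto
  have xmin: "card (R x) \<le> card (R y)" if "y \<in> F" for y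
    unfolding xm mv_def using fin that by (intro Min_le) auto
  have backr: "(y, x) \<in> E\<^sup>*" if yR: "y \<in> R x" for y
  proof (rule ccontr)
    assume nb: "(y, x) \<notin> E\<^sup>*"
    have yF: "y \<in> F" using RF[OF xF] yR by auto
    have "R y \<subseteq> R x" using yR unfolding R_def by (auto intro: rtrancl_trans)
    moreover have "x \<in> R x" unfolding R_def by auto
    moreover have "x \<notin> R y" using nb unfolding R_def by auto
    ultimately have "R y \<subset> R x" by blast
    then have "card (R y) < card (R x)" by (rule psubset_card_mono[OF Rfin[OF xF]])
    then show False using xmin[OF yF] by simp
  qed
  define C where "C = R x"
  have xC: "x \<in> C" unfolding C_def R_def by auto
  have CF: "C \<subseteq> F" unfolding C_def using RF[OF xF] .
  have CD: "C \<subseteq> D" using CF FD by auto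
  have Cfin: "finite C" unfolding C_def using Rfin[OF xF] .
  have Ccl: "W i z \<in> C" if "i \<in> {1..N}" "z \<in> C" for i z
  proof -
    have "(z, W i z) \<in> E" using that CF unfolding E_def by auto
    then show ?thesis using that(2) unfolding C_def R_def by (auto intro: rtrancl_into_rtrancl)
  qed
  have plus: "(z, x) \<in> E\<^sup>+" if "z \<in> C" for z
  proof -
    have i1: "1 \<in> {1..N}" using N1 by simp
    have "(z, W 1 z) \<in> E" using that CF i1 unfolding E_def by blast
    moreover have "(W 1 z, x) \<in> E\<^sup>*" using backr Ccl[OF i1 that] unfolding C_def by blast
    ultimately show ?thesis by (rule rtrancl_into_trancl2)
  qed
  have pos: "\<exists>k. hit_within N W p k x z > 0" if "(z, x) \<in> E\<^sup>+" for z
    using that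
  proof (induction rule: converse_trancl_induct)
    case (base z)
    then obtain i where i: "i \<in> {1..N}" "z \<in> F" "x = W i z" unfolding E_def by blast
    have "p i z * (if W i z = x then 1 else hit_within N W p 0 x (W i z)) \<le> hit_within N W p (Suc 0) x z"
      using i FD by (intro hit_Suc_ge[OF difs]) auto
    moreover have "0 < p i z" using difs_facts(2)[OF difs i(1)] i FD by auto
    ultimately show ?case using i by (intro exI[of _ "Suc 0"]) auto
  next
    case (step z y)
    then obtain i where i: "i \<in> {1..N}" "z \<in> F" "y = W i z" unfolding E_def by blast
    obtain k where k: "hit_within N W p k x y > 0" using step by blast
    have "p i z * (if W i z = x then 1 else hit_within N W p k x (W i z)) \<le> hit_within N W p (Suc k) x z"
      using i FD by (intro hit_Suc_ge[OF difs]) auto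
    moreover have "0 < p i z" using difs_facts(2)[OF difs i(1)] i FD by auto
    moreover have "0 < (if W i z = x then 1 else hit_within N W p k x (W i z))" using i k by auto
    ultimately have "0 < hit_within N W p (Suc k) x z" by (meson less_le_trans mult_pos_pos)
    then show ?case by blast
  qed
  have "\<forall>z\<in>C. \<exists>k. hit_within N W p k x z > 0" using pos plus by blast
  then obtain kf where kf: "\<And>z. z \<in> C \<Longrightarrow> hit_within N W p (kf z) x z > 0" by metis
  define K where "K = Max (kf ` C)"
  have hK: "hit_within N W p K x z > 0" if "z \<in> C" for z
  proof -
    have "kf z \<le> K" unfolding K_def using Cfin that by simp
    then have "hit_within N W p (kf z) x z \<le> hit_within N W p K x z"
      using that CD by (intro hit_mono[OF difs]) auto
    then show ?thesis using kf[OF that] by simp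
  qed
  define M where "M = Max ((\<lambda>z. 1 - hit_within N W p K x z) ` C)"
  have Mge: "1 - hit_within N W p K x z \<le> M" if "z \<in> C" for z
    unfolding M_def using Cfin that by simp
  have "M \<in> (\<lambda>z. 1 - hit_within N W p K x z) ` C" unfolding M_def using Cfin xC by (intro Max_in) auto
  then obtain z0 where z0: "z0 \<in> C" "M = 1 - hit_within N W p K x z0" by auto
  have M1: "M < 1" using z0 hK by simp
  have M0: "0 \<le> M" using z0 hit_bounds[OF difs, of z0] CD by auto
  have mult: "1 - hit_within N W p (a + K) x z \<le> (1 - hit_within N W p a x z) * M" if "z \<in> C" for a z
    using that
  proof (induction a arbitrary: z)
    case 0 then show ?case using Mge by simp
  next
    case (Suc a)
    have zD: "z \<in> D" using Suc.prems CD by auto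
    have "1 - hit_within N W p (Suc a + K) x z
       = (\<Sum>i=1..N. p i z * (if W i z = x then 0 else 1 - hit_within N W p (a + K) x (W i z)))"
      using one_minus_hit[OF difs zD] by simp
    also have "\<dots> \<le> (\<Sum>i=1..N. p i z * (if W i z = x then 0 else (1 - hit_within N W p a x (W i z)) * M))"
    proof (rule sum_mono)
      fix i assume i: "i \<in> {1..N}"
      have "W i z \<in> C" using Ccl[OF i Suc.prems] .
      moreover have "0 < p i z" using difs_facts(2)[OF difs i zD] .
      ultimately show "p i z * (if W i z = x then 0 else 1 - hit_within N W p (a + K) x (W i z))
          \<le> p i z * (if W i z = x then 0 else (1 - hit_within N W p a x (W i z)) * M)"
        using Suc.IH by (intro mult_left_mono) auto
    qed
    also have "\<dots> = M * (\<Sum>i=1..N. p i z * (if W i z = x then 0 else 1 - hit_within N W p a x (W i z)))"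
      unfolding sum_distrib_left by (rule sum.cong) auto
    also have "\<dots> = (1 - hit_within N W p (Suc a) x z) * M"
      using one_minus_hit[OF difs zD] by simp
    finally show ?case .
  qed
  have powb: "1 - hit_within N W p (m * K) x z \<le> M ^ m" if "z \<in> C" for m z
  proof (induction m)
    case 0 then show ?case by simp
  next
    case (Suc m)
    have "1 - hit_within N W p (Suc m * K) x z = 1 - hit_within N W p (m * K + K) x z" by (simp add: add.commute)
    also have "\<dots> \<le> (1 - hit_within N W p (m * K) x z) * M" by (rule mult[OF that])
    also have "\<dots> \<le> M ^ m * M" using Suc.IH M0 by (rule mult_right_mono)
    finally show ?case by (simp add: mult.commute)
  qed
  have xD: "x \<in> D" using xC CD by auto
  have bdd: "bdd_above (range (\<lambda>k. hit_within N W p k x x))"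
    using hit_bounds[OF difs xD] by (auto intro!: bdd_aboveI)
  have le1: "(SUP k. hit_within N W p k x x) \<le> 1"
    using hit_bounds[OF difs xD] by (intro cSUP_least) auto
  have ge1: "(SUP k. hit_within N W p k x x) \<ge> 1"
  proof (rule ccontr)
    assume "\<not> (SUP k. hit_within N W p k x x) \<ge> 1"
    then have "0 < 1 - (SUP k. hit_within N W p k x x)" by simp
    then obtain m where m: "M ^ m < 1 - (SUP k. hit_within N W p k x x)"
      using real_arch_pow_inv[OF _ M1] by blast
    have "hit_within N W p (m * K) x x \<le> (SUP k. hit_within N W p k x x)"
      by (rule cSUP_upper[OF _ bdd]) simp
    then show False using powb[OF xC, of m] m by simp
  qed
  have "recurrent N W p x" unfolding recurrent_def using le1 ge1 by simp
  then show ?thesis using xC CF by auto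
qed


theorem theorem13:
  fixes nrm :: "real^'n \<Rightarrow> real" and \<delta> :: real and N :: nat
    and w :: "nat \<Rightarrow> real^'n \<Rightarrow> real^'n" and p :: "nat \<Rightarrow> real^'n \<Rightarrow> real"
    and lam :: "nat \<Rightarrow> real" and xf :: "nat \<Rightarrow> real^'n" and c :: "real^'n"
  assumes "\<delta> > 0" and "is_norm nrm"
    and "is_DIFS (discretization \<delta>) (\<lambda>i x. roundoff \<delta> (w i x)) p N"
    and "\<forall>i\<in>{1..N}. 0 \<le> lam i \<and> lam i < 1"
    and "\<forall>i\<in>{1..N}. \<forall>x y. nrm (w i x - w i y) \<le> lam i * nrm (x - y)"
    and "\<forall>i\<in>{1..N}. w i (xf i) = xf i"
  defines "r \<equiv> ((1 + Max (lam ` {1..N})) / (1 - Max (lam ` {1..N}))) * Max ((\<lambda>i. nrm (xf i - c)) ` {1..N})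
               + theta nrm \<delta> / (1 - Max (lam ` {1..N}))"
  shows "(\<forall>\<epsilon>>0. let S = {y. nrm (y - c) < r + \<epsilon>} \<inter> discretization \<delta> in
            (\<forall>i\<in>{1..N}. (\<lambda>x. roundoff \<delta> (w i x)) ` S \<subseteq> S)
          \<and> {x\<in>discretization \<delta>. recurrent N (\<lambda>i x. roundoff \<delta> (w i x)) p x} \<subseteq> S)
       \<and> {x\<in>discretization \<delta>. recurrent N (\<lambda>i x. roundoff \<delta> (w i x)) p x} \<noteq> {}"
proof -
  note d0 = assms(1) and nr = assms(2) and difs = assms(3)
  define W where "W = (\<lambda>i x. roundoff \<delta> (w i x))"
  define D :: "(real^'n) set" where "D = discretization \<delta>"
  have difsW: "is_DIFS D W p N" using difs unfolding W_def D_def .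
  have N1: "N \<ge> 1"
  proof (rule ccontr)
    assume "\<not> N \<ge> 1"
    then have "N = 0" by simp
    moreover have "grid_pt \<delta> 0 \<in> D" unfolding D_def discretization_def by auto
    ultimately show False using difs_facts(3)[OF difsW] by fastforce
  qed
  define L where "L = Max (lam ` {1..N})"
  define rm where "rm = Max ((\<lambda>i. nrm (xf i - c)) ` {1..N})"
  define th where "th = theta nrm \<delta>"
  have ne: "{1..N} \<noteq> {}" using N1 by simp
  have Lin: "L \<in> lam ` {1..N}" unfolding L_def using ne by (intro Max_in) auto
  have L1: "L < 1" "0 \<le> L" using Lin assms(4) by auto
  have lamL: "lam i \<le> L" if "i \<in> {1..N}" for i unfolding L_def using that by simp
  have rmge: "nrm (xf i - c) \<le> rm" if "i \<in> {1..N}" for i unfolding rm_def using that by simp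
  have rm0: "0 \<le> rm" using rmge[of 1] N1 nrm_basic(3)[OF nr] by (meson atLeastAtMost_iff order_trans order_refl)
  have th0: "0 \<le> th" unfolding th_def by (rule theta_nonneg[OF nr d0])
  have r_eq: "r = ((1 + L) / (1 - L)) * rm + th / (1 - L)" unfolding r_def L_def rm_def th_def ..
  have r0: "0 \<le> r" unfolding r_eq using L1 rm0 th0 by simp
  have nz: "1 - L \<noteq> 0" using L1 by simp
  have rL: "(1 - L) * r = (1 + L) * rm + th" unfolding r_eq distrib_left using nz by simp
  have key: "nrm (W i z - c) < R" if i: "i \<in> {1..N}" and R: "R > r" and z: "nrm (z - c) \<le> R" for i z R
  proof -
    have li: "0 \<le> lam i" "lam i < 1" "lam i \<le> L" using assms(4) i lamL by auto
    have "nrm (W i z - c) \<le> nrm (W i z - w i z) + nrm (w i z - c)" by (rule nrm_basic(2)[OF nr])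
    also have "nrm (W i z - w i z) \<le> th"
      unfolding W_def th_def using roundoff_err[OF nr d0, of "w i z"] nrm_basic(1)[OF nr] by simp
    also have "nrm (w i z - c) \<le> nrm (w i z - xf i) + nrm (xf i - c)" by (rule nrm_basic(2)[OF nr])
    also have "nrm (w i z - xf i) \<le> lam i * nrm (z - xf i)"
      using assms(5,6) i by metis
    also have "nrm (z - xf i) \<le> nrm (z - c) + nrm (c - xf i)" by (rule nrm_basic(2)[OF nr])
    also have "nrm (c - xf i) = nrm (xf i - c)" by (rule nrm_basic(1)[OF nr])
    finally have a: "nrm (W i z - c) \<le> th + lam i * (nrm (z - c) + nrm (xf i - c)) + nrm (xf i - c)"
      using li by (simp add: mult_left_mono)
    have b: "lam i * (nrm (z - c) + nrm (xf i - c)) \<le> lam i * (R + rm)"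
      using li z rmge[OF i] by (intro mult_left_mono) auto
    have c1: "(1 + lam i) * rm + th \<le> (1 + L) * rm + th" using li rm0 by (simp add: mult_right_mono)
    have c2: "(1 - L) * r \<le> (1 - lam i) * r" using li r0 by (simp add: mult_right_mono)
    have c3: "(1 - lam i) * r < (1 - lam i) * R" using li R by simp
    have "nrm (W i z - c) \<le> th + lam i * (R + rm) + rm" using a b rmge[OF i] by linarith
    also have "\<dots> = lam i * R + ((1 + lam i) * rm + th)" by (simp add: algebra_simps)
    also have "\<dots> < lam i * R + (1 - lam i) * R" using c1 c2 c3 rL by linarith
    also have "\<dots> = R" by (simp add: algebra_simps)
    finally show ?thesis .
  qed
  have WD: "W i z \<in> D" for i z unfolding W_def D_def using roundoff_disc[OF d0] .
  have inv: "W i z \<in> {y. nrm (y - c) < R} \<inter> D" if "i \<in> {1..N}" "R > r" "z \<in> {y. nrm (y - c) < R} \<inter> D" for i z R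
    using key[OF that(1,2)] that(3) WD by auto
  have part1: "(\<forall>i\<in>{1..N}. W i ` S \<subseteq> S) \<and> {x\<in>D. recurrent N W p x} \<subseteq> S"
    if S: "S = {y. nrm (y - c) < r + \<epsilon>} \<inter> D" "\<epsilon> > 0" for S \<epsilon>
  proof
    show "\<forall>i\<in>{1..N}. W i ` S \<subseteq> S" using inv[of _ "r + \<epsilon>"] S by auto
    show "{x\<in>D. recurrent N W p x} \<subseteq> S"
    proof
      fix x assume x: "x \<in> {x\<in>D. recurrent N W p x}"
      show "x \<in> S"
      proof (rule ccontr)
        assume "x \<notin> S"
        then have R: "nrm (x - c) > r" using x S by auto
        define T where "T = {y. nrm (y - c) < nrm (x - c)} \<inter> D"
        have "\<not> recurrent N W p x"
        proof (rule not_recurrent)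
          show "\<And>i z. i \<in> {1..N} \<Longrightarrow> z \<in> T \<Longrightarrow> W i z \<in> T" unfolding T_def using inv R by blast
          show "x \<notin> T" unfolding T_def by simp
          show "\<And>i. i \<in> {1..N} \<Longrightarrow> W i x \<in> T" unfolding T_def using key R WD by auto
        qed
        then show False using x by simp
      qed
    qed
  qed
  define F where "F = {y. nrm (y - c) < r + 1} \<inter> D"
  have "\<exists>x\<in>F. recurrent N W p x"
  proof (rule exists_recurrent[OF difsW])
    show "finite F" unfolding F_def D_def by (rule finite_ball_grid[OF nr d0])
    show "F \<subseteq> D" unfolding F_def by auto
    have "nrm (roundoff \<delta> c - c) \<le> th"
      unfolding th_def using roundoff_err[OF nr d0, of c] nrm_basic(1)[OF nr] by simp
    moreover have "th \<le> r"
    proof -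
      have "0 \<le> L * r" "0 \<le> (1 + L) * rm" using L1 r0 rm0 by simp_all
      then show ?thesis using rL by (simp add: algebra_simps)
    qed
    ultimately have "roundoff \<delta> c \<in> F" unfolding F_def D_def using roundoff_disc[OF d0] by auto
    then show "F \<noteq> {}" by auto
    show "\<And>i z. i \<in> {1..N} \<Longrightarrow> z \<in> F \<Longrightarrow> W i z \<in> F" unfolding F_def using inv[of _ "r + 1"] by auto
    show "N \<ge> 1" by (rule N1)
  qed
  then have ne2: "{x\<in>D. recurrent N W p x} \<noteq> {}" unfolding F_def by auto
  show ?thesis using part1 ne2 unfolding W_def D_def Let_def by blast
qed

end
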